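(* Let $\mathcal{A}$ be a finite alphabet, $\mathbf{p}$ an irreducible pair on $\mathcal{A}$ and $\mathbf{q}$ a pair in the labeled Rauzy class of $\mathbf{p}$. Then $\mathcal{S}(\mathbf{q})=\mathcal{S}(\mathbf{p})$.
   Context: Let $n=\#\mathcal{A}$. A pair is $\mathbf{p}=(p_0,p_1)$ with $p_0,p_1:\mathcal{A}\to\{1,\dots,n\}$ bijections. Irreducible: $p_0^{-1}\{1,\dots,k\}\ne p_1^{-1}\{1,\dots,k\}$ for $1\le k<n$. Rauzy move of type $\varepsilon\in\{0,1\}$: $\varepsilon\mathbf{p}=(p'_0,p'_1)$, $p'_\varepsilon=p_\varepsilon$, and for $z=p_\varepsilon^{-1}(n)$, $p'_{1-\varepsilon}(b)=p_{1-\varepsilon}(b)$ if $p_{1-\varepsilon}(b)\le p_{1-\varepsilon}(z)$, $=p_{1-\varepsilon}(b)+1$ if $p_{1-\varepsilon}(z)<p_{1-\varepsilon}(b)<n$, $=p_{1-\varepsilon}(z)+1$ if $p_{1-\varepsilon}(b)=n$. The labeled Rauzy class of $\mathbf{p}$ is the set of pairs reachable from $\mathbf{p}$ by Rauzy moves. For irreducible $\mathbf{p}$, $\mathcal{S}(\mathbf{p}):\mathcal{A}\to\mathcal{A}$ is defined by $\mathcal{S}(\mathbf{p})(\alpha)=p_0^{-1}(1)$ if $p_1(\alpha)=1$; $=p_0^{-1}(p_0(p_1^{-1}(n))+1)$ if $p_1(\alpha)=p_1(p_0^{-1}(n))+1$; $=p_0^{-1}(p_0(p_1^{-1}(p_1(\alpha)-1))+1)$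 otherwise. *)

theory Defs
  imports "HOL-Library.Cardinality"
begin

type_synonym 'a rpair = "('a \<Rightarrow> nat) \<times> ('a \<Rightarrow> nat)"

definition is_pair :: "('a::finite) rpair \<Rightarrow> bool" where
  "is_pair P \<longleftrightarrow> bij_betw (fst P) UNIV {1..CARD('a)} \<and> bij_betw (snd P) UNIV {1..CARD('a)}"

definition irreducible_pair :: "('a::finite) rpair \<Rightarrow> bool" where
  "irreducible_pair P \<longleftrightarrow> is_pair P \<and>
     (\<forall>k. 1 \<le> k \<and> k < CARD('a) \<longrightarrow> fst P -` {1..k} \<noteq> snd P -` {1..k})"

definition comp :: "'a rpair \<Rightarrow> nat \<Rightarrow> ('a \<Rightarrow> nat)" where
  "comp P e = (if e = 0 then fst P else snd P)"

definition rauzy_move :: "nat \<Rightarrow> ('a::finite) rpair \<Rightarrow> 'a rpair" where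
  "rauzy_move e P =
     (let n = CARD('a); pe = comp P e; po = comp P (1 - e); z = inv pe n;
          po' = (\<lambda>b. if po b \<le> po z then po b
                     else if po b < n then po b + 1
                     else po z + 1)
      in if e = 0 then (pe, po') else (po', pe))"

definition rauzy_step :: "('a::finite) rpair \<Rightarrow> 'a rpair \<Rightarrow> bool" where
  "rauzy_step P q \<longleftrightarrow> (\<exists>e\<in>{0,1}. q = rauzy_move e P)"

definition rauzy_class :: "('a::finite) rpair \<Rightarrow> 'a rpair set" where
  "rauzy_class P = {q. rauzy_step\<^sup>*\<^sup>* P q}"

definition S_perm :: "('a::finite) rpair \<Rightarrow> 'a \<Rightarrow> 'a" where
  "S_perm P \<alpha> =
     (let n = CARD('a); p0 = fst P; p1 = snd P in
      if p1 \<alpha> = 1 then inv p0 1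
      else if p1 \<alpha> = p1 (inv p0 n) + 1 then inv p0 (p0 (inv p1 n) + 1)
      else inv p0 (p0 (inv p1 (p1 \<alpha> - 1)) + 1))"

end

theory Submission
  imports Defs
begin

lemma bijF:
  assumes "bij_betw f (UNIV::'a set) {1..n}"
  shows "1 \<le> f x" "f x \<le> n" "inj f" "1 \<le> k \<Longrightarrow> k \<le> n \<Longrightarrow> \<exists>y. f y = k"
    "1 \<le> k \<Longrightarrow> k \<le> n \<Longrightarrow> inv f k = y \<longleftrightarrow> f y = k"
proof -
  show "1 \<le> f x" "f x \<le> n" using assms by (auto simp: bij_betw_def)
  show "inj f" using assms by (auto simp: bij_betw_def)
  show "1 \<le> k \<Longrightarrow> k \<le> n \<Longrightarrow> \<exists>y. f y = k" using assms
    by (metis UNIV_I atLeastAtMost_iff bij_betw_iff_bijections)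
  assume "1 \<le> k" "k \<le> n"
  then obtain y0 where "f y0 = k" using assms
    by (metis UNIV_I atLeastAtMost_iff bij_betw_iff_bijections)
  moreover have "inj f" using assms by (auto simp: bij_betw_def)
  ultimately show "inv f k = y \<longleftrightarrow> f y = k"
    by (metis inj_eq inv_f_f)
qed

lemma injD': "inj f \<Longrightarrow> f x = f y \<Longrightarrow> x = y" by (simp add: inj_eq)

definition ins :: "('a \<Rightarrow> nat) \<Rightarrow> 'a \<Rightarrow> nat \<Rightarrow> 'a \<Rightarrow> nat" where
  "ins po z n = (\<lambda>b. if po b \<le> po z then po b else if po b < n then po b + 1 else po z + 1)"

lemma card_pos: "CARD('a::finite) \<ge> 1"
  by (simp add: Suc_leI)

lemma ins_bij:
  fixes po :: "'a::finite \<Rightarrow> nat"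
  assumes b: "bij_betw po UNIV {1..CARD('a)}" and z: "po z < CARD('a)"
  shows "bij_betw (ins po z CARD('a)) UNIV {1..CARD('a)}"
proof -
  let ?n = "CARD('a)"
  let ?f = "ins po z ?n"
  note B = bijF[OF b]
  have inj: "inj ?f"
  proof (rule injI)
    fix x y assume "?f x = ?f y"
    then have "po x = po y" using B(2)[of x] B(2)[of y] z unfolding ins_def
      by (auto split: if_splits)
    then show "x = y" using B(3) by (simp add: inj_eq)
  qed
  have sub: "?f ` UNIV \<subseteq> {1..?n}" using B(1,2) z unfolding ins_def by force
  have "card (?f ` UNIV) = ?n" using inj by (simp add: card_image)
  then have "?f ` UNIV = {1..?n}" using sub by (intro card_subset_eq) auto
  then show ?thesis using inj by (simp add: bij_betw_def)
qed

lemma S_char: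
  fixes p0 p1 :: "'a::finite \<Rightarrow> nat"
  assumes b0: "bij_betw p0 UNIV {1..CARD('a)}" and b1: "bij_betw p1 UNIV {1..CARD('a)}"
    and a: "p0 a = CARD('a)" and b: "p1 b = CARD('a)" and ab: "a \<noteq> b"
  shows "S_perm (p0,p1) \<alpha> = \<gamma> \<longleftrightarrow>
    (if p1 \<alpha> = 1 then p0 \<gamma> = 1 else if p1 \<alpha> = p1 a + 1 then p0 \<gamma> = p0 b + 1
     else (\<forall>\<beta>. p1 \<beta> = p1 \<alpha> - 1 \<longrightarrow> p0 \<gamma> = p0 \<beta> + 1))"
proof -
  let ?n = "CARD('a)"
  note B0 = bijF[OF b0] and B1 = bijF[OF b1]
  have ia: "inv p0 ?n = a" using B0(5)[of ?n a] a card_pos by simp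
  have ib: "inv p1 ?n = b" using B1(5)[of ?n b] b card_pos by simp
  have pb: "p0 b < ?n" using B0(2)[of b] a ab B0(3) by (metis injD' le_neq_implies_less)
  show ?thesis
  proof (cases "p1 \<alpha> = 1")
    case True
    then show ?thesis unfolding S_perm_def Let_def using B0(5)[of 1 \<gamma>] card_pos by simp
  next
    case n1: False
    show ?thesis
    proof (cases "p1 \<alpha> = p1 a + 1")
      case True
      then show ?thesis unfolding S_perm_def Let_def using n1 B0(5)[of "p0 b + 1" \<gamma>] pb by (simp add: ia ib)
    next
      case False
      have ge: "p1 \<alpha> \<ge> 2" using n1 B1(1)[of \<alpha>] by linarith
      obtain \<beta>0 where be: "p1 \<beta>0 = p1 \<alpha> - 1" using B1(4)[of "p1 \<alpha> - 1"] B1(2)[of \<alpha>] ge by (metis add_le_imp_le_diff diff_le_self le_trans one_add_one)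
      have ib0: "inv p1 (p1 \<alpha> - 1) = \<beta>0" using B1(5)[of "p1 \<alpha> - 1" \<beta>0] be B1(2)[of \<alpha>] ge by simp
      have ib0': "inv p1 (p1 \<alpha> - Suc 0) = \<beta>0" using ib0 by simp
      have "\<beta>0 \<noteq> a" using be False ge by auto
      then have pb0: "p0 \<beta>0 < ?n" using B0(2)[of \<beta>0] a B0(3) by (metis injD' le_neq_implies_less)
      have all: "(\<forall>\<beta>. p1 \<beta> = p1 \<alpha> - 1 \<longrightarrow> p0 \<gamma> = p0 \<beta> + 1) \<longleftrightarrow> p0 \<gamma> = p0 \<beta>0 + 1"
        using be B1(3) by (metis injD')
      show ?thesis unfolding S_perm_def Let_def all
        using n1 False B0(5)[of "p0 \<beta>0 + 1" \<gamma>] pb0 by (simp add: ia ib ib0')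
    qed
  qed
qed

lemma move0_S:
  fixes p0 p1 :: "'a::finite \<Rightarrow> nat"
  assumes b0: "bij_betw p0 UNIV {1..CARD('a)}" and b1: "bij_betw p1 UNIV {1..CARD('a)}"
    and a: "p0 a = CARD('a)" and b: "p1 b = CARD('a)" and ab: "a \<noteq> b"
    and b': "ins p1 a CARD('a) b' = CARD('a)"
  shows "S_perm (p0, ins p1 a CARD('a)) \<alpha> = S_perm (p0,p1) \<alpha>"
proof -
  let ?n = "CARD('a)"
  let ?q = "ins p1 a ?n"
  note B0 = bijF[OF b0] and B1 = bijF[OF b1]
  have m: "p1 a < ?n" using B1(2)[of a] b ab B1(3) by (metis injD' le_neq_implies_less)
  have bq: "bij_betw ?q UNIV {1..?n}" using ins_bij[OF b1 m] .
  note Q = bijF[OF bq]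
  have qa: "?q a = p1 a" unfolding ins_def by simp
  have ab': "a \<noteq> b'" using qa b' m by auto
  define \<gamma> where "\<gamma> = S_perm (p0,p1) \<alpha>"
  have C: "(if p1 \<alpha> = 1 then p0 \<gamma> = 1 else if p1 \<alpha> = p1 a + 1 then p0 \<gamma> = p0 b + 1
     else (\<forall>\<beta>. p1 \<beta> = p1 \<alpha> - 1 \<longrightarrow> p0 \<gamma> = p0 \<beta> + 1))"
    using S_char[OF b0 b1 a b ab, of \<alpha> \<gamma>] \<gamma>_def by simp
  have qd: "\<And>x. ?q x = (if p1 x \<le> p1 a then p1 x else if p1 x < ?n then p1 x + 1 else p1 a + 1)"
    unfolding ins_def by simp
  have r: "\<And>x. 1 \<le> p1 x \<and> p1 x \<le> ?n" using B1(1,2) by auto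
  have ra: "1 \<le> p1 a" using r by auto
  have i1: "\<And>x y. p1 x = p1 y \<Longrightarrow> x = y" using B1(3) by (metis injD')
  have iq: "\<And>x y. ?q x = ?q y \<Longrightarrow> x = y" using Q(3) by (metis injD')
  have "(if ?q \<alpha> = 1 then p0 \<gamma> = 1 else if ?q \<alpha> = ?q a + 1 then p0 \<gamma> = p0 b' + 1
     else (\<forall>\<beta>. ?q \<beta> = ?q \<alpha> - 1 \<longrightarrow> p0 \<gamma> = p0 \<beta> + 1))"
  proof (cases "?q \<alpha> = 1")
    case True
    then have "p1 \<alpha> = 1" using qd[of \<alpha>] r[of \<alpha>] r[of a] using ra by (auto split: if_splits)
    then show ?thesis using True C by simp
  next
    case n1: False
    show ?thesis
    proof (cases "?q \<alpha> = ?q a + 1")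
      case True
      then have ab: "\<alpha> = b" using qd[of \<alpha>] r[of \<alpha>] qa i1[of \<alpha> b] b using ra by (auto split: if_splits)
      have "p0 \<gamma> = p0 b' + 1"
      proof (cases "p1 a + 1 = ?n")
        case True
        then have "b' = b" using iq[of b' b] b' qd[of b] b by simp
        then show ?thesis using C ra ab True b by (simp split: if_splits)
      next
        case False
        have "p1 b' = ?n - 1" using qd[of b'] b' m r[of b'] False using ra by (auto split: if_splits)
        then show ?thesis using C ra ab False b m using ra by (auto split: if_splits)
      qed
      then show ?thesis using n1 True by simp
    next
      case n2: False
      have "\<forall>\<beta>. ?q \<beta> = ?q \<alpha> - 1 \<longrightarrow> p0 \<gamma> = p0 \<beta> + 1"
      proof (intro allI impI)
        fix \<beta> assume be: "?q \<beta> = ?q \<alpha> - 1"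
        consider "p1 \<alpha> \<le> p1 a" | "p1 a < p1 \<alpha>" "p1 \<alpha> = p1 a + 1" | "p1 a + 1 < p1 \<alpha>" "p1 \<alpha> < ?n"
          | "p1 \<alpha> = ?n" using r[of \<alpha>] by linarith
        then show "p0 \<gamma> = p0 \<beta> + 1"
        proof cases
          case 1
          then have "p1 \<beta> = p1 \<alpha> - 1" using be qd[of \<alpha>] qd[of \<beta>] n1 r[of \<beta>] r[of \<alpha>]
            using ra by (auto split: if_splits)
          then show ?thesis using C ra 1 n1 qd[of \<alpha>] using ra by (auto split: if_splits)
        next
          case 2
          then have "p1 \<alpha> < ?n" using b i1[of \<alpha> b] qd[of \<alpha>] n2 qa using ra by (auto split: if_splits)
          then have "?q \<beta> = p1 a + 1" using be qd[of \<alpha>] 2 by simp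
          then have "\<beta> = b" using iq[of \<beta> b] qd[of b] b m by simp
          then show ?thesis using C ra 2 by simp
        next
          case 3
          then have "p1 \<beta> = p1 \<alpha> - 1" using be qd[of \<alpha>] qd[of \<beta>] r[of \<beta>] r[of \<alpha>]
            using ra by (auto split: if_splits)
          then show ?thesis using C ra 3 using ra by (auto split: if_splits)
        next
          case 4
          then show ?thesis using n2 qd[of \<alpha>] qa m by simp
        qed
      qed
      then show ?thesis using n1 n2 by simp
    qed
  qed
  then show ?thesis using S_char[OF b0 bq a b' ab', of \<alpha> \<gamma>] \<gamma>_def by simp
qed

lemma move1_S:
  fixes p0 p1 :: "'a::finite \<Rightarrow> nat"
  assumes b0: "bij_betw p0 UNIV {1..CARD('a)}" and b1: "bij_betw p1 UNIV {1..CARD('a)}"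
    and a: "p0 a = CARD('a)" and b: "p1 b = CARD('a)" and ab: "a \<noteq> b"
    and a': "ins p0 b CARD('a) a' = CARD('a)"
  shows "S_perm (ins p0 b CARD('a), p1) \<alpha> = S_perm (p0,p1) \<alpha>"
proof -
  let ?n = "CARD('a)"
  let ?q = "ins p0 b ?n"
  note B0 = bijF[OF b0] and B1 = bijF[OF b1]
  have m: "p0 b < ?n" using B0(2)[of b] a ab B0(3) by (metis injD' le_neq_implies_less)
  have bq: "bij_betw ?q UNIV {1..?n}" using ins_bij[OF b0 m] .
  note Q = bijF[OF bq]
  have qb: "?q b = p0 b" unfolding ins_def by simp
  have ab': "a' \<noteq> b" using qb a' m by auto
  define \<gamma> where "\<gamma> = S_perm (p0,p1) \<alpha>"
  have C: "(if p1 \<alpha> = 1 then p0 \<gamma> = 1 else if p1 \<alpha> = p1 a + 1 then p0 \<gamma> = p0 b + 1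
     else (\<forall>\<beta>. p1 \<beta> = p1 \<alpha> - 1 \<longrightarrow> p0 \<gamma> = p0 \<beta> + 1))"
    using S_char[OF b0 b1 a b ab, of \<alpha> \<gamma>] \<gamma>_def by simp
  have qd: "\<And>x. ?q x = (if p0 x \<le> p0 b then p0 x else if p0 x < ?n then p0 x + 1 else p0 b + 1)"
    unfolding ins_def by simp
  have r: "\<And>x. 1 \<le> p0 x \<and> p0 x \<le> ?n" using B0(1,2) by auto
  have r1: "\<And>x. 1 \<le> p1 x \<and> p1 x \<le> ?n" using B1(1,2) by auto
  have rb: "1 \<le> p0 b" using r by auto
  have i0: "\<And>x y. p0 x = p0 y \<Longrightarrow> x = y" using B0(3) by (metis injD')
  have i1: "\<And>x y. p1 x = p1 y \<Longrightarrow> x = y" using B1(3) by (metis injD')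
  have A': "a' = a \<and> p0 b + 1 = ?n \<or> a' \<noteq> a \<and> p0 a' = ?n - 1 \<and> p0 b + 1 < ?n"
    using qd[of a'] a' m r[of a'] a i0[of a' a] by (auto split: if_splits)
  have "(if p1 \<alpha> = 1 then ?q \<gamma> = 1 else if p1 \<alpha> = p1 a' + 1 then ?q \<gamma> = ?q b + 1
     else (\<forall>\<beta>. p1 \<beta> = p1 \<alpha> - 1 \<longrightarrow> ?q \<gamma> = ?q \<beta> + 1))"
  proof (cases "p1 \<alpha> = 1")
    case True
    then show ?thesis using C qd[of \<gamma>] rb by simp
  next
    case n1: False
    show ?thesis
    proof (cases "p1 \<alpha> = p1 a' + 1")
      case True
      have "p0 \<gamma> = ?n"
      proof (cases "a' = a")
        case True
        then show ?thesis using C n1 \<open>p1 \<alpha> = p1 a' + 1\<close> A' by simp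
      next
        case False
        then have "p1 \<alpha> \<noteq> p1 a + 1" using True i1[of a' a] by auto
        then show ?thesis using C n1 True A' False by auto
      qed
      then have "?q \<gamma> = p0 b + 1" using qd[of \<gamma>] m by simp
      then show ?thesis using n1 True qb by simp
    next
      case n2: False
      have "\<forall>\<beta>. p1 \<beta> = p1 \<alpha> - 1 \<longrightarrow> ?q \<gamma> = ?q \<beta> + 1"
      proof (intro allI impI)
        fix \<beta> assume be: "p1 \<beta> = p1 \<alpha> - 1"
        have nba': "\<beta> \<noteq> a'" using be n2 n1 r1[of \<alpha>] by auto
        have nbb: "\<beta> \<noteq> b" using be b n1 r1[of \<alpha>] by auto
        show "?q \<gamma> = ?q \<beta> + 1"
        proof (cases "p1 \<alpha> = p1 a + 1")
          case True
          then have "\<beta> = a" using be i1[of \<beta> a] by simp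
          then have "a' \<noteq> a" using nba' by simp
          then have "p0 b + 1 < ?n" using A' by simp
          then show ?thesis using C n1 True qd[of \<gamma>] qd[of a] a \<open>\<beta> = a\<close> by simp
        next
          case False
          then have g: "p0 \<gamma> = p0 \<beta> + 1" using C n1 be by simp
          have "\<beta> \<noteq> a" using False be n1 r1[of \<alpha>] by auto
          then have "p0 \<beta> < ?n" using r[of \<beta>] a i0[of \<beta> a] by fastforce
          moreover have "p0 \<beta> \<noteq> p0 b" using nbb i0 by blast
          moreover have "p0 b < p0 \<beta> \<Longrightarrow> p0 \<beta> + 1 < ?n"
            using A' nba' i0[of \<beta> a'] \<open>\<beta> \<noteq> a\<close> a i0[of \<beta> a] r[of \<beta>] by (auto, linarith)
          ultimately show ?thesis using g qd[of \<gamma>] qd[of \<beta>] by auto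
        qed
      qed
      then show ?thesis using n1 n2 by simp
    qed
  qed
  then show ?thesis using S_char[OF bq b1 a' b ab', of \<alpha> \<gamma>] \<gamma>_def by simp
qed

definition Inv :: "('a::finite) rpair \<Rightarrow> bool" where
  "Inv P \<longleftrightarrow> is_pair P \<and> (CARD('a) = 1 \<or> inv (fst P) CARD('a) \<noteq> inv (snd P) CARD('a))"

lemma move_eq:
  fixes P :: "('a::finite) rpair"
  shows "rauzy_move 0 P = (fst P, ins (snd P) (inv (fst P) CARD('a)) CARD('a))"
    "rauzy_move 1 P = (ins (fst P) (inv (snd P) CARD('a)) CARD('a), snd P)"
  unfolding rauzy_move_def comp_def ins_def Let_def by simp_all

lemma step_inv:
  fixes P Q :: "('a::finite) rpair"
  assumes I: "Inv P" and st: "rauzy_step P Q"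
  shows "Inv Q \<and> S_perm Q = S_perm P"
proof -
  let ?n = "CARD('a)"
  obtain p0 p1 where P: "P = (p0, p1)" by fastforce
  have b0: "bij_betw p0 UNIV {1..?n}" and b1: "bij_betw p1 UNIV {1..?n}"
    using I P unfolding Inv_def is_pair_def by auto
  note B0 = bijF[OF b0] and B1 = bijF[OF b1]
  obtain e where e: "e \<in> {0,1}" "Q = rauzy_move e P" using st unfolding rauzy_step_def by blast
  show ?thesis
  proof (cases "?n = 1")
    case True
    have "\<And>x. p0 x = 1" "\<And>x. p1 x = 1" using B0(1,2) B1(1,2) True by (metis le_antisym)+
    then have "ins p0 z ?n = p0" "ins p1 z ?n = p1" for z unfolding ins_def by auto
    then have "Q = P" using e move_eq[of P] P by auto
    then show ?thesis using I by simp
  next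
    case False
    define a where "a = inv p0 ?n"
    define b where "b = inv p1 ?n"
    have ab: "a \<noteq> b" using I P False unfolding Inv_def a_def b_def by auto
    have a: "p0 a = ?n" using B0(5)[of ?n a] card_pos a_def by simp
    have b: "p1 b = ?n" using B1(5)[of ?n b] card_pos b_def by simp
    have m0: "p0 b < ?n" using B0(2)[of b] a ab B0(3) by (metis injD' le_neq_implies_less)
    have m1: "p1 a < ?n" using B1(2)[of a] b ab B1(3) by (metis injD' le_neq_implies_less)
    show ?thesis
    proof (cases "e = 0")
      case True
      then have Q: "Q = (p0, ins p1 a ?n)" using e move_eq[of P] P a_def by simp
      have bq: "bij_betw (ins p1 a ?n) UNIV {1..?n}" using ins_bij[OF b1 m1] .
      obtain b' where b': "ins p1 a ?n b' = ?n" using bijF(4)[OF bq, of ?n] card_pos by auto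
      have ib': "inv (ins p1 a ?n) ?n = b'" using bijF(5)[OF bq, of ?n b'] b' card_pos by simp
      have "ins p1 a ?n a = p1 a" unfolding ins_def by simp
      then have "a \<noteq> b'" using b' m1 by auto
      then have "Inv Q" unfolding Inv_def is_pair_def Q using b0 bq ib' a_def by simp
      moreover have "S_perm Q = S_perm P" unfolding Q P
        using move0_S[OF b0 b1 a b ab b'] by auto
      ultimately show ?thesis by simp
    next
      case False
      then have Q: "Q = (ins p0 b ?n, p1)" using e move_eq[of P] P b_def by simp
      have bq: "bij_betw (ins p0 b ?n) UNIV {1..?n}" using ins_bij[OF b0 m0] .
      obtain a' where a': "ins p0 b ?n a' = ?n" using bijF(4)[OF bq, of ?n] card_pos by auto
      have ia': "inv (ins p0 b ?n) ?n = a'" using bijF(5)[OF bq, of ?n a'] a' card_pos by simp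
      have "ins p0 b ?n b = p0 b" unfolding ins_def by simp
      then have "a' \<noteq> b" using a' m0 by auto
      then have "Inv Q" unfolding Inv_def is_pair_def Q using b1 bq ia' b_def by simp
      moreover have "S_perm Q = S_perm P" unfolding Q P
        using move1_S[OF b0 b1 a b ab a'] by auto
      ultimately show ?thesis by simp
    qed
  qed
qed

lemma irr_Inv:
  fixes P :: "('a::finite) rpair"
  assumes "irreducible_pair P" shows "Inv P"
proof -
  let ?n = "CARD('a)"
  have ip: "is_pair P" using assms unfolding irreducible_pair_def by simp
  have b0: "bij_betw (fst P) UNIV {1..?n}" and b1: "bij_betw (snd P) UNIV {1..?n}"
    using ip unfolding is_pair_def by auto
  note B0 = bijF[OF b0] and B1 = bijF[OF b1]
  have "inv (fst P) ?n \<noteq> inv (snd P) ?n" if ne: "?n \<noteq> 1"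
  proof
    assume eq: "inv (fst P) ?n = inv (snd P) ?n"
    define c where "c = inv (fst P) ?n"
    have c0: "fst P c = ?n" using B0(5)[of ?n c] card_pos c_def by simp
    have c1: "snd P c = ?n" using B1(5)[of ?n c] card_pos c_def eq by simp
    have "fst P -` {1..?n - 1} = - {c}"
    proof (intro set_eqI)
      fix x
      have "1 \<le> fst P x" "fst P x \<le> ?n" using B0(1,2) by auto
      moreover have "fst P x = ?n \<longleftrightarrow> x = c" using c0 B0(3) by (metis injD')
      ultimately show "x \<in> fst P -` {1..?n - 1} \<longleftrightarrow> x \<in> - {c}" using ne card_pos[where 'a='a] by (auto simp del: One_nat_def)
    qed
    moreover have "snd P -` {1..?n - 1} = - {c}"
    proof (intro set_eqI)
      fix x
      have "1 \<le> snd P x" "snd P x \<le> ?n" using B1(1,2) by auto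
      moreover have "snd P x = ?n \<longleftrightarrow> x = c" using c1 B1(3) by (metis injD')
      ultimately show "x \<in> snd P -` {1..?n - 1} \<longleftrightarrow> x \<in> - {c}" using ne card_pos[where 'a='a] by (auto simp del: One_nat_def)
    qed
    moreover have "1 \<le> ?n - 1" "?n - 1 < ?n" using ne card_pos[where 'a='a] by linarith+
    ultimately show False using assms unfolding irreducible_pair_def by metis
  qed
  then show ?thesis using ip unfolding Inv_def by auto
qed

theorem proposition2p10:
  fixes p q :: "('a::finite) rpair"
  assumes "irreducible_pair p"
    and "q \<in> rauzy_class p"
  shows "S_perm q = S_perm p"
proof -
  have r: "rauzy_step\<^sup>*\<^sup>* p q" using assms(2) unfolding rauzy_class_def by simp
  have "Inv q \<and> S_perm q = S_perm p" using r
  proof (induction rule: rtranclp_induct)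
    case base
    then show ?case using irr_Inv[OF assms(1)] by simp
  next
    case (step y z)
    then show ?case using step_inv by metis
  qed
  then show ?thesis by simp
qed

end
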